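(* Let $f$ be the linear Anosov diffeomorphism of $\mathbb{T}^2=\mathbb{R}^2/\mathbb{Z}^2$ induced by $L=\begin{pmatrix}a&b\\c&d\end{pmatrix}$ with $a,b,c,d\in\mathbb{Z}$ and $ad-bc=1$ (and $L$ has no eigenvalue on the unit circle). Then: (i) $b$ divides $a-d$ if and only if $f$ is $R$-reversible for $R$ the involution of $\mathbb{T}^2$ induced by a matrix of the form $\begin{pmatrix}1&0\\ \gamma&-1\end{pmatrix}$ with $\gamma\in\mathbb{Z}$ (necessarily $\gamma=\frac{d-a}{b}$), and likewise if and only if $f$ is $R$-reversible for $R$ induced by a matrix $\begin{pmatrix}-1&0\\ \gamma&1\end{pmatrix}$ with $\gamma\in\mathbb{Z}$ (necessarily $\gamma=\frac{a-d}{b}$). (ii) $c$ divides $a-d$ if and only if $f$ is $R$-reversible for $R$ induced by a matrix of the form $\begin{pmatrix}1&\gamma\\ 0&-1\end{pmatrix}$ with $\gamma\in\mathbb{Z}$ (necessarily $\gamma=\frac{d-a}{c}$), and likewise if and only if $f$ is $R$-reversible for $R$ induced by a matrix $\begin{pmatrix}-1&\gamma\\ 0&1\end{pmatrix}$ with $\gamma\in\mathbb{Z}$ (necessarily $\gamma=\frac{a-d}{c}$). (iii) Given $\alpha,\beta\in\mathbb{Z}\setminus\{0\}$ with $1-\alpha^2\neq0$ and $\beta$ dividing $1-\alpha^2$, let $R$ be the involution of $\mathbb{T}^2$ induced by $A=\begin{pmatrix}\alpha&\beta\\ \frac{1-\alpha^2}{\beta}&-\alpha\end{pmatrix}$. Then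 $f$ is $R$-reversible if and only if $(x,y)=(2b\alpha+(d-a)\beta,\ \beta)$ is a solution of the generalized Pell equation $x^2-Dy^2=N$, where $D=(a+d)^2-4$ and $N=4b^2$.
   Context: A diffeomorphism of $\mathbb{T}^2$ is induced by an integer matrix $M$ with $\det M=\pm1$ if it is the map $\pi(v)\mapsto\pi(Mv)$, where $\pi:\mathbb{R}^2\to\mathbb{R}^2/\mathbb{Z}^2$ is the projection. A linear Anosov diffeomorphism is one induced by such a matrix with no eigenvalue of modulus one. For an involution $R$ ($R\circ R=\mathrm{Id}$), $f$ is $R$-reversible if $R\circ f=f^{-1}\circ R$. *)

theory Defs
  imports Complex_Main
begin

text \<open>The torus R^2/Z^2, represented by canonical representatives in [0,1)^2;
  the projection pi is (x,y) maps to (frac x, frac y).\<close>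
definition torus :: "(real \<times> real) set" where
  "torus = {0..<1} \<times> {0..<1}"

definition induced :: "int \<Rightarrow> int \<Rightarrow> int \<Rightarrow> int \<Rightarrow> real \<times> real \<Rightarrow> real \<times> real" where
  "induced a b c d = (\<lambda>(x, y). (frac (of_int a * x + of_int b * y), frac (of_int c * x + of_int d * y)))"

definition anosov_matrix :: "int \<Rightarrow> int \<Rightarrow> int \<Rightarrow> int \<Rightarrow> bool" where
  "anosov_matrix a b c d \<longleftrightarrow> (a * d - b * c = 1 \<or> a * d - b * c = -1) \<and>
     (\<forall>l::complex. cmod l = 1 \<longrightarrow>
        (l - of_int a) * (l - of_int d) - of_int b * of_int c \<noteq> 0)"

definition involution_on :: "'a set \<Rightarrow> ('a \<Rightarrow> 'a) \<Rightarrow> bool" where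
  "involution_on T R \<longleftrightarrow> (\<forall>p\<in>T. R p \<in> T \<and> R (R p) = p)"

definition reversible :: "'a set \<Rightarrow> ('a \<Rightarrow> 'a) \<Rightarrow> ('a \<Rightarrow> 'a) \<Rightarrow> bool" where
  "reversible T R f \<longleftrightarrow> involution_on T R \<and> (\<forall>p\<in>T. R (f p) = inv_into T f (R p))"

definition pell_solution :: "int \<Rightarrow> int \<Rightarrow> int \<Rightarrow> int \<Rightarrow> bool" where
  "pell_solution D N x y \<longleftrightarrow> x^2 - D * y^2 = N"

end

theory Submission
  imports Defs
begin

lemma frac_lin: "frac (of_int a * frac u + of_int b * frac v) = frac (of_int a * u + of_int b * v)"
proof -
  have "of_int a * frac u + of_int b * frac v = (of_int a * u + of_int b * v) + of_int (- a * \<lfloor>u\<rfloor> - b * \<lfloor>v\<rfloor>)"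
    by (simp add: frac_def algebra_simps)
  then show ?thesis by (simp only: frac_add_of_int_right)
qed

lemma induced_comp:
  "induced a b c d (induced e f g h p) = induced (a*e+b*g) (a*f+b*h) (c*e+d*g) (c*f+d*h) p"
proof -
  obtain x y where p: "p = (x,y)" by (cases p)
  have 1: "of_int (a*e+b*g) * x + of_int (a*f+b*h) * y = of_int a * (of_int e * x + of_int f * y) + of_int b * (of_int g * x + of_int h * y)"
    by (simp add: algebra_simps)
  have 2: "of_int (c*e+d*g) * x + of_int (c*f+d*h) * y = of_int c * (of_int e * x + of_int f * y) + of_int d * (of_int g * x + of_int h * y)"
    by (simp add: algebra_simps)
  show ?thesis unfolding induced_def p using 1 2 by (simp add: frac_lin)
qed

lemma induced_torus: "induced a b c d p \<in> torus"
  by (cases p) (simp add: induced_def torus_def frac_lt_1)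

lemma induced_id: "p \<in> torus \<Longrightarrow> induced 1 0 0 1 p = p"
  by (cases p) (simp add: induced_def torus_def)

lemma small_int_zero:
  fixes k :: int
  assumes "of_int k * (1 / (of_int \<bar>k\<bar> + 2)) \<in> (\<int>::real set)"
  shows "k = 0"
proof -
  obtain n where n: "of_int k * (1 / (of_int \<bar>k\<bar> + 2)) = (of_int n :: real)"
    using assms Ints_cases by blast
  have pos: "(of_int \<bar>k\<bar> + 2 :: real) > 0" by simp
  have "of_int k = (of_int n :: real) * (of_int \<bar>k\<bar> + 2)" using n pos by (simp add: field_simps)
  hence "(of_int k :: real) = of_int (n * (\<bar>k\<bar> + 2))" by simp
  hence e: "k = n * (\<bar>k\<bar> + 2)" by (simp only: of_int_eq_iff)
  show ?thesis
  proof (rule ccontr)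
    assume "k \<noteq> 0"
    then have "n \<noteq> 0" using e by auto
    then have "\<bar>n * (\<bar>k\<bar> + 2)\<bar> \<ge> \<bar>k\<bar> + 2"
      using mult_right_mono[of 1 "\<bar>n\<bar>" "\<bar>k\<bar> + 2"] by (simp add: abs_mult)
    then show False using e by simp
  qed
qed

lemma induced_eq_id:
  assumes "\<forall>p\<in>torus. induced a b c d p = p"
  shows "a = 1 \<and> b = 0 \<and> c = 0 \<and> d = 1"
proof -
  have gen: "k = 1" if h: "\<forall>x\<in>{0..<1::real}. frac (of_int k * x) = x" for k :: int
  proof -
    define x :: real where "x = 1 / (of_int \<bar>k - 1\<bar> + 2)"
    have x: "x \<in> {0..<1}" unfolding x_def
      by (auto simp: field_simps)
    have "frac (of_int k * x) = x" using h x by blast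
    hence "of_int k * x - x \<in> \<int>" by (simp add: frac_unique_iff)
    hence "of_int (k-1) * x \<in> \<int>" by (simp add: algebra_simps)
    hence "k - 1 = 0" unfolding x_def by (rule small_int_zero)
    thus ?thesis by simp
  qed
  have gen0: "k = 0" if h: "\<forall>x\<in>{0..<1::real}. frac (of_int k * x) = 0" for k :: int
  proof -
    define x :: real where "x = 1 / (of_int \<bar>k\<bar> + 2)"
    have x: "x \<in> {0..<1}" unfolding x_def
      by (auto simp: field_simps)
    have "frac (of_int k * x) = 0" using h x by blast
    hence "of_int k * x \<in> \<int>" by simp
    thus ?thesis unfolding x_def by (rule small_int_zero)
  qed
  have A: "\<forall>x\<in>{0..<1::real}. frac (of_int a * x) = x \<and> frac (of_int c * x) = 0"
  proof
    fix x :: real assume "x \<in> {0..<1}"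
    hence "(x,0) \<in> torus" by (simp add: torus_def)
    hence "induced a b c d (x,0) = (x,0)" using assms by blast
    thus "frac (of_int a * x) = x \<and> frac (of_int c * x) = 0" by (simp add: induced_def)
  qed
  have B: "\<forall>x\<in>{0..<1::real}. frac (of_int b * x) = 0 \<and> frac (of_int d * x) = x"
  proof
    fix x :: real assume "x \<in> {0..<1}"
    hence "(0,x) \<in> torus" by (simp add: torus_def)
    hence "induced a b c d (0,x) = (0,x)" using assms by blast
    thus "frac (of_int b * x) = 0 \<and> frac (of_int d * x) = x" by (simp add: induced_def)
  qed
  show ?thesis using gen gen0 A B by blast
qed

lemma rev_iff:
  fixes a b c d p q r :: int
  assumes det: "a * d - b * c = 1" and inv: "p * p + q * r = 1"
  shows "reversible torus (induced p q r (-p)) (induced a b c d) \<longleftrightarrow> p*a + q*c + r*b - p*d = 0"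
proof -
  define R where "R = induced p q r (-p)"
  define f where "f = induced a b c d"
  define g where "g = induced d (-b) (-c) a"
  have RR: "R (R x) = x" if "x \<in> torus" for x
    using that inv unfolding R_def induced_comp by (simp add: algebra_simps induced_id[simplified])
  have gf: "g (f x) = x" if "x \<in> torus" for x
    using that det unfolding g_def f_def induced_comp by (simp add: algebra_simps induced_id[simplified])
  have fg: "f (g x) = x" if "x \<in> torus" for x
    using that det unfolding g_def f_def induced_comp by (simp add: algebra_simps induced_id[simplified])
  have Rt: "R x \<in> torus" "f x \<in> torus" "g x \<in> torus" for x
    unfolding R_def f_def g_def by (rule induced_torus)+
  have injf: "inj_on f torus" by (metis gf inj_onI)
  have surjf: "y \<in> f ` torus" if "y \<in> torus" for y using fg[OF that] Rt(3) by (metis image_eqI)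
  have invol: "involution_on torus R" unfolding involution_on_def using RR Rt by blast
  define m11 where "m11 = p*a + q*c"
  define m12 where "m12 = p*b + q*d"
  define m21 where "m21 = r*a - p*c"
  define m22 where "m22 = r*b - p*d"
  have RfRf: "R (f (R (f x))) = induced (m11*m11+m12*m21) (m11*m12+m12*m22) (m21*m11+m22*m21) (m21*m12+m22*m22) x" for x
    unfolding R_def f_def induced_comp m11_def m12_def m21_def m22_def
    by (simp add: algebra_simps)
  have detM: "m11 * m22 - m12 * m21 = -1"
  proof -
    have "m11 * m22 - m12 * m21 = - (p*p + q*r) * (a*d - b*c)"
      unfolding m11_def m12_def m21_def m22_def by (simp add: algebra_simps)
    thus ?thesis using det inv by simp
  qed
  have "reversible torus R f \<longleftrightarrow> (\<forall>x\<in>torus. R (f (R (f x))) = x)"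
  proof
    assume rv: "reversible torus R f"
    show "\<forall>x\<in>torus. R (f (R (f x))) = x"
    proof
      fix x assume x: "x \<in> torus"
      have "R (f x) = inv_into torus f (R x)" using rv x unfolding reversible_def by blast
      hence "f (R (f x)) = R x" using f_inv_into_f[OF surjf[OF Rt(1)]] by simp
      thus "R (f (R (f x))) = x" using RR x by simp
    qed
  next
    assume h: "\<forall>x\<in>torus. R (f (R (f x))) = x"
    have "\<forall>x\<in>torus. R (f x) = inv_into torus f (R x)"
    proof
      fix x assume x: "x \<in> torus"
      have "R (R (f (R (f x)))) = R x" using h x by simp
      hence "f (R (f x)) = R x" using RR Rt by simp
      thus "R (f x) = inv_into torus f (R x)" using inv_into_f_f[OF injf Rt(1)] by metis
    qed
    thus "reversible torus R f" using invol unfolding reversible_def by blast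
  qed
  also have "\<dots> \<longleftrightarrow> (m11*m11+m12*m21 = 1 \<and> m11*m12+m12*m22 = 0 \<and> m21*m11+m22*m21 = 0 \<and> m21*m12+m22*m22 = 1)"
    unfolding RfRf using induced_eq_id[of "m11*m11+m12*m21"] induced_id by auto
  also have "\<dots> \<longleftrightarrow> m11 + m22 = 0"
  proof
    assume h: "m11*m11+m12*m21 = 1 \<and> m11*m12+m12*m22 = 0 \<and> m21*m11+m22*m21 = 0 \<and> m21*m12+m22*m22 = 1"
    have e1: "(m11 + m22) * m11 = 0" using h detM by (simp add: algebra_simps)
    have e2: "(m11 + m22) * m12 = 0" using h by (simp add: algebra_simps)
    have e3: "(m11 + m22) * m22 = 0" using h detM by (simp add: algebra_simps)
    show "m11 + m22 = 0"
    proof (rule ccontr)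
      assume "m11 + m22 \<noteq> 0"
      then have "m11 = 0" "m12 = 0" "m22 = 0" using e1 e2 e3 by auto
      then show False using detM by simp
    qed
  next
    assume t: "m11 + m22 = 0"
    hence "m22 = - m11" by simp
    thus "m11*m11+m12*m21 = 1 \<and> m11*m12+m12*m22 = 0 \<and> m21*m11+m22*m21 = 0 \<and> m21*m12+m22*m22 = 1"
      using detM by (simp add: algebra_simps)
  qed
  finally show ?thesis unfolding R_def f_def m11_def m22_def by (simp add: algebra_simps)
qed

theorem theoremA:
  fixes a b c d :: int
  defines "f \<equiv> induced a b c d"
  assumes det: "a * d - b * c = 1"
    and anosov: "anosov_matrix a b c d"
  shows
   "((b dvd (a - d) \<longleftrightarrow> (\<exists>\<gamma>. reversible torus (induced 1 0 \<gamma> (-1)) f)) \<and>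
     (\<forall>\<gamma>. reversible torus (induced 1 0 \<gamma> (-1)) f \<longrightarrow> \<gamma> * b = d - a) \<and>
     (b dvd (a - d) \<longleftrightarrow> (\<exists>\<gamma>. reversible torus (induced (-1) 0 \<gamma> 1) f)) \<and>
     (\<forall>\<gamma>. reversible torus (induced (-1) 0 \<gamma> 1) f \<longrightarrow> \<gamma> * b = a - d))
    \<and>
    ((c dvd (a - d) \<longleftrightarrow> (\<exists>\<gamma>. reversible torus (induced 1 \<gamma> 0 (-1)) f)) \<and>
     (\<forall>\<gamma>. reversible torus (induced 1 \<gamma> 0 (-1)) f \<longrightarrow> \<gamma> * c = d - a) \<and>
     (c dvd (a - d) \<longleftrightarrow> (\<exists>\<gamma>. reversible torus (induced (-1) \<gamma> 0 1) f)) \<and>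
     (\<forall>\<gamma>. reversible torus (induced (-1) \<gamma> 0 1) f \<longrightarrow> \<gamma> * c = a - d))
    \<and>
    (\<forall>\<alpha> \<beta> :: int. \<alpha> \<noteq> 0 \<longrightarrow> \<beta> \<noteq> 0 \<longrightarrow> 1 - \<alpha>^2 \<noteq> 0 \<longrightarrow> \<beta> dvd (1 - \<alpha>^2) \<longrightarrow>
       (reversible torus (induced \<alpha> \<beta> ((1 - \<alpha>^2) div \<beta>) (-\<alpha>)) f \<longleftrightarrow>
        pell_solution ((a + d)^2 - 4) (4 * b^2) (2 * b * \<alpha> + (d - a) * \<beta>) \<beta>))"
proof -
  have r1: "reversible torus (induced 1 0 g (-1)) f \<longleftrightarrow> g * b = d - a" for g
    using rev_iff[OF det, of 1 0 g] unfolding f_def by (simp add: algebra_simps)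
  have r2: "reversible torus (induced (-1) 0 g 1) f \<longleftrightarrow> g * b = a - d" for g
    using rev_iff[OF det, of "-1" 0 g] unfolding f_def by (simp add: algebra_simps)
  have r3: "reversible torus (induced 1 g 0 (-1)) f \<longleftrightarrow> g * c = d - a" for g
    using rev_iff[OF det, of 1 g 0] unfolding f_def by (simp add: algebra_simps)
  have r4: "reversible torus (induced (-1) g 0 1) f \<longleftrightarrow> g * c = a - d" for g
    using rev_iff[OF det, of "-1" g 0] unfolding f_def by (simp add: algebra_simps)
  have dv1: "b dvd (a - d) \<longleftrightarrow> (\<exists>g. g * b = d - a)"
  proof
    assume "b dvd (a - d)"
    then obtain k where "a - d = b * k" by (auto elim: dvdE)
    then show "\<exists>g. g * b = d - a" by (intro exI[of _ "-k"]) (simp add: algebra_simps)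
  next
    assume "\<exists>g. g * b = d - a"
    then obtain g where "g * b = d - a" by blast
    then show "b dvd (a - d)" by (intro dvdI[of _ _ "-g"]) (simp add: algebra_simps)
  qed
  have dv2: "b dvd (a - d) \<longleftrightarrow> (\<exists>g. g * b = a - d)"
  proof
    assume "b dvd (a - d)"
    then obtain k where "a - d = b * k" by (auto elim: dvdE)
    then show "\<exists>g. g * b = a - d" by (intro exI[of _ "k"]) (simp add: algebra_simps)
  next
    assume "\<exists>g. g * b = a - d"
    then obtain g where "g * b = a - d" by blast
    then show "b dvd (a - d)" by (intro dvdI[of _ _ "g"]) (simp add: algebra_simps)
  qed
  have dv3: "c dvd (a - d) \<longleftrightarrow> (\<exists>g. g * c = d - a)"
  proof
    assume "c dvd (a - d)"
    then obtain k where "a - d = c * k" by (auto elim: dvdE)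
    then show "\<exists>g. g * c = d - a" by (intro exI[of _ "-k"]) (simp add: algebra_simps)
  next
    assume "\<exists>g. g * c = d - a"
    then obtain g where "g * c = d - a" by blast
    then show "c dvd (a - d)" by (intro dvdI[of _ _ "-g"]) (simp add: algebra_simps)
  qed
  have dv4: "c dvd (a - d) \<longleftrightarrow> (\<exists>g. g * c = a - d)"
  proof
    assume "c dvd (a - d)"
    then obtain k where "a - d = c * k" by (auto elim: dvdE)
    then show "\<exists>g. g * c = a - d" by (intro exI[of _ "k"]) (simp add: algebra_simps)
  next
    assume "\<exists>g. g * c = a - d"
    then obtain g where "g * c = a - d" by blast
    then show "c dvd (a - d)" by (intro dvdI[of _ _ "g"]) (simp add: algebra_simps)
  qed
  have b0: "b \<noteq> 0"
  proof
    assume b: "b = 0"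
    hence "a * d = 1" using det by simp
    hence ad: "(a = 1 \<and> d = 1) \<or> (a = -1 \<and> d = -1)" using zmult_eq_1_iff by auto
    have "cmod (of_int a) = 1" using ad by auto
    moreover have "(of_int a - of_int a) * (of_int a - of_int d) - of_int b * of_int c = (0::complex)"
      using b by simp
    ultimately show False using anosov unfolding anosov_matrix_def by blast
  qed
  have p3: "reversible torus (induced \<alpha> \<beta> ((1 - \<alpha>^2) div \<beta>) (-\<alpha>)) f \<longleftrightarrow>
        pell_solution ((a + d)^2 - 4) (4 * b^2) (2 * b * \<alpha> + (d - a) * \<beta>) \<beta>"
    if hb: "\<beta> \<noteq> 0" and hd: "\<beta> dvd (1 - \<alpha>^2)" for \<alpha> \<beta> :: int
  proof -
    define r where "r = (1 - \<alpha>^2) div \<beta>"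
    have br: "\<beta> * r = 1 - \<alpha>^2" unfolding r_def using hd by simp
    have inv: "\<alpha> * \<alpha> + \<beta> * r = 1" using br by (simp add: power2_eq_square)
    have "reversible torus (induced \<alpha> \<beta> r (-\<alpha>)) f \<longleftrightarrow> \<alpha>*a + \<beta>*c + r*b - \<alpha>*d = 0"
      using rev_iff[OF det inv] unfolding f_def .
    also have "\<dots> \<longleftrightarrow> \<beta> * (\<alpha>*a + \<beta>*c + r*b - \<alpha>*d) = 0" using hb by simp
    also have "\<beta> * (\<alpha>*a + \<beta>*c + r*b - \<alpha>*d) = \<alpha>*\<beta>*(a-d) + \<beta>^2*c + (\<beta> * r)*b"
      by (simp add: algebra_simps power2_eq_square)
    also have "\<dots> = \<alpha>*\<beta>*(a-d) + \<beta>^2*c + (1 - \<alpha>^2)*b" by (simp only: br)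
    also have "(\<dots> = 0) \<longleftrightarrow> -4*b*(\<alpha>*\<beta>*(a-d) + \<beta>^2*c + (1 - \<alpha>^2)*b) = 0" using b0 by simp
    also have "-4*b*(\<alpha>*\<beta>*(a-d) + \<beta>^2*c + (1 - \<alpha>^2)*b) =
       (2 * b * \<alpha> + (d - a) * \<beta>)^2 - ((a + d)^2 - 4) * \<beta>^2 - 4 * b^2"
    proof -
      have "b * c = a * d - 1" using det by simp
      then have "-4*b*(\<alpha>*\<beta>*(a-d) + \<beta>^2*c + (1 - \<alpha>^2)*b) = -4*(b*(\<alpha>*\<beta>*(a-d)) + \<beta>^2*(b*c) + (1 - \<alpha>^2)*b*b)"
        by (simp add: algebra_simps)
      also have "\<dots> = -4*(b*(\<alpha>*\<beta>*(a-d)) + \<beta>^2*(a*d-1) + (1 - \<alpha>^2)*b*b)" using \<open>b * c = a * d - 1\<close> by simp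
      also have "\<dots> = (2 * b * \<alpha> + (d - a) * \<beta>)^2 - ((a + d)^2 - 4) * \<beta>^2 - 4 * b^2"
        by (simp add: algebra_simps power2_eq_square)
      finally show ?thesis .
    qed
    finally show ?thesis unfolding r_def pell_solution_def by simp
  qed
  show ?thesis
    apply (intro conjI)
    subgoal by (simp only: r1 dv1)
    subgoal by (simp add: r1)
    subgoal by (simp only: r2 dv2)
    subgoal by (simp add: r2)
    subgoal by (simp only: r3 dv3)
    subgoal by (simp add: r3)
    subgoal by (simp only: r4 dv4)
    subgoal by (simp add: r4)
    subgoal using p3 by auto
    done
qed

end
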